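(* Let $H\in(\tfrac12,1)$, $\sigma>0$. (1) For all integers $1\le i\le n-1<N$, $$\sigma c_H (n-1)^{H-\frac12}I_n(i)\le j_n^H(i)\le \sigma c_H\, n^{H-\frac12}I_n(i),$$ where $I_n(i)=\int_{i-1}^i x^{\frac12-H}\phi_n^H(x)dx$ and $\phi_n^H(x)=(n-x)^{H-\frac12}-(n-1-x)^{H-\frac12}$. (2) For all integers $1<n\le N$, $$g_H\le g_n^H\le g_H\Big(1+\frac1{n-1}\Big)^{H-\frac12}.$$
   Context: $c_H=\sqrt{\frac{2H\,\Gamma(\frac32-H)}{\Gamma(H+\frac12)\Gamma(2-2H)}}$, $C_H=c_H(H-\frac12)$, $g_H=\frac{\sigma c_H}{H+\frac12}$, $j_n^H(i)=\sigma C_H\int_{i-1}^i x^{\frac12-H}\Big(\int_0^1(v+n-1)^{H-\frac12}(v+n-1-x)^{H-\frac32}dv\Big)dx$, $g_n^H=\sigma C_H\int_{n-1}^n x^{\frac12-H}(n-x)^{H-\frac12}\Big(\int_0^1(y(n-x)+x)^{H-\frac12}y^{H-\frac32}dy\Big)dx$. *)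

theory Defs
  imports "HOL-Analysis.Analysis"
begin

definition cH :: "real \<Rightarrow> real" where
  "cH H = sqrt ((2 * H * Gamma (3/2 - H)) / (Gamma (H + 1/2) * Gamma (2 - 2 * H)))"

definition CH :: "real \<Rightarrow> real" where
  "CH H = cH H * (H - 1/2)"

definition gH :: "real \<Rightarrow> real \<Rightarrow> real" where
  "gH H \<sigma> = \<sigma> * cH H / (H + 1/2)"

definition jnH :: "real \<Rightarrow> real \<Rightarrow> nat \<Rightarrow> nat \<Rightarrow> real" where
  "jnH H \<sigma> n i = \<sigma> * CH H *
     integral {real i - 1 .. real i}
       (\<lambda>x. x powr (1/2 - H) *
          integral {0..1} (\<lambda>v. (v + real n - 1) powr (H - 1/2) * (v + real n - 1 - x) powr (H - 3/2)))"

definition gnH :: "real \<Rightarrow> real \<Rightarrow> nat \<Rightarrow> real" where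
  "gnH H \<sigma> n = \<sigma> * CH H *
     integral {real n - 1 .. real n}
       (\<lambda>x. x powr (1/2 - H) * (real n - x) powr (H - 1/2) *
          integral {0..1} (\<lambda>y. (y * (real n - x) + x) powr (H - 1/2) * y powr (H - 3/2)))"

definition phinH :: "real \<Rightarrow> nat \<Rightarrow> real \<Rightarrow> real" where
  "phinH H n x = (real n - x) powr (H - 1/2) - (real n - 1 - x) powr (H - 1/2)"

definition InH :: "real \<Rightarrow> nat \<Rightarrow> nat \<Rightarrow> real" where
  "InH H n i = integral {real i - 1 .. real i} (\<lambda>x. x powr (1/2 - H) * phinH H n x)"

end

theory Submission imports Defs begin

lemma meas_id: "(\<lambda>x::real. x) \<in> borel_measurable (lebesgue_on S)"
  by (simp add: measurable_completion measurable_restrict_space1)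


lemma int_bound:
  fixes f g :: "real \<Rightarrow> real"
  assumes "f \<in> borel_measurable (lebesgue_on {a..b})" "g integrable_on {a..b}"
    "\<And>x. x \<in> {a..b} \<Longrightarrow> \<bar>f x\<bar> \<le> g x"
  shows "f integrable_on {a..b}"
proof -
  have S: "{a..b} \<in> sets lebesgue" by simp
  show ?thesis by (rule measurable_bounded_by_integrable_imp_integrable_real[OF assms S])
qed

lemma shift_pow:
  fixes a c :: real
  assumes a: "0 < a" and c: "0 \<le> c"
  shows "((\<lambda>v. (v + c) powr (a - 1)) has_integral (((c+1) powr a - c powr a)/a)) {0..1}"
proof -
  have a1: "a - 1 > -1" using a by simp
  have h1: "((\<lambda>u. u powr (a-1)) has_integral ((c+1) powr a / a)) {0..c+1}"
    using has_integral_powr_from_0[OF a1, of "c+1"] c by simp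
  have h0: "((\<lambda>u. u powr (a-1)) has_integral (c powr a / a)) {0..c}"
    using has_integral_powr_from_0[OF a1, of "c"] c by simp
  have "(\<lambda>u. u powr (a-1)) integrable_on {c..c+1}"
    by (rule integrable_on_subinterval[OF has_integral_integrable[OF h1]]) (use c in auto)
  then obtain J where J: "((\<lambda>u. u powr (a-1)) has_integral J) {c..c+1}" by blast
  have "((\<lambda>u. u powr (a-1)) has_integral (c powr a / a + J)) {0..c+1}"
    by (rule has_integral_combine[OF _ _ h0 J]) (use c in auto)
  from has_integral_unique[OF this h1] have "J = (c+1) powr a / a - c powr a / a" by linarith
  then have "J = ((c+1) powr a - c powr a)/a" by (simp add: diff_divide_distrib)
  with J have "((\<lambda>u. u powr (a-1)) has_integral (((c+1) powr a - c powr a)/a)) {c..c+1}" by simp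
  from has_integral_shift_real_ivl[OF this, of c] show ?thesis by simp
qed

lemma refl_pow:
  fixes a N :: real
  assumes a: "0 < a"
  shows "((\<lambda>x. (N - x) powr a) has_integral (1/(a+1))) {N-1..N}"
proof -
  have a1: "a > -1" using a by simp
  have "((\<lambda>u. u powr a) has_integral (1/(a+1))) {0..1}"
    using has_integral_powr_from_0[OF a1, of 1] by simp
  then have "((\<lambda>x. (\<lambda>u. u powr a) (-x)) has_integral (1/(a+1))) {-1..-0}"
    by (rule iffD2[OF has_integral_reflect_real])
  then have "((\<lambda>x. (-x) powr a) has_integral (1/(a+1))) {-1..0}" by simp
  from has_integral_shift_real_ivl[OF this, of "-N"]
  have "((\<lambda>x. (- (x + - N)) powr a) has_integral (1/(a+1))) {-1 - -N..0 - -N}" .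
  moreover have "{-1 - -N..0 - -N} = {N-1..N}" by simp
  moreover have "(\<lambda>x. (- (x + - N)) powr a) = (\<lambda>x. (N - x) powr a)" by simp
  ultimately show ?thesis by simp
qed

lemma int_le_spike0:
  fixes f g :: "real \<Rightarrow> real"
  assumes "f integrable_on {0..1}" "g integrable_on {0..1}" "\<And>v. v \<in> {0<..1} \<Longrightarrow> f v \<le> g v"
  shows "integral {0..1} f \<le> integral {0..1} g"
proof -
  define f' where "f' = (\<lambda>v. if v = 0 then g 0 else f v)"
  have e: "integral {0..1} f' = integral {0..1} f"
    by (rule integral_spike[of "{0}"]) (auto simp: f'_def)
  have i: "f' integrable_on {0..1}"
    by (rule integrable_spike[OF assms(1), of "{0}"]) (auto simp: f'_def)
  have "integral {0..1} f' \<le> integral {0..1} g"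
    by (rule integral_le[OF i assms(2)]) (auto simp: f'_def intro: assms(3))
  with e show ?thesis by simp
qed


lemma inner1:
  fixes H N x :: real
  assumes H: "1/2 < H" "H < 1" and N: "2 \<le> N" and x: "0 \<le> x" "x \<le> N - 1"
  defines "phi \<equiv> (N - x) powr (H - 1/2) - (N - 1 - x) powr (H - 1/2)"
  defines "F \<equiv> integral {0..1} (\<lambda>v. (v + N - 1) powr (H - 1/2) * (v + N - 1 - x) powr (H - 3/2))"
  shows "(\<lambda>v. (v + N - 1) powr (H - 1/2) * (v + N - 1 - x) powr (H - 3/2)) integrable_on {0..1}"
    and "(N - 1) powr (H - 1/2) * (phi / (H - 1/2)) \<le> F"
    and "F \<le> N powr (H - 1/2) * (phi / (H - 1/2))"
proof -
  define a where "a = H - 1/2"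
  have a: "0 < a" using H by (simp add: a_def)
  define c where "c = N - 1 - x"
  have c: "0 \<le> c" using x by (simp add: c_def)
  have g0: "((\<lambda>v. (v + c) powr (a - 1)) has_integral (((c+1) powr a - c powr a)/a)) {0..1}"
    by (rule shift_pow[OF a c])
  have e1: "(\<lambda>v. (v + c) powr (a - 1)) = (\<lambda>v. (v + N - 1 - x) powr (H - 3/2))"
    by (rule ext) (simp add: a_def c_def algebra_simps)
  have e2: "((c+1) powr a - c powr a)/a = phi / (H - 1/2)"
    by (simp add: a_def c_def phi_def)
  have g: "((\<lambda>v. (v + N - 1 - x) powr (H - 3/2)) has_integral (phi / (H - 1/2))) {0..1}"
    using g0 unfolding e1 e2 .
  let ?h = "\<lambda>v. (v + N - 1) powr (H - 1/2) * (v + N - 1 - x) powr (H - 3/2)"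
  have bnd: "(N - 1) powr (H - 1/2) * (v + N - 1 - x) powr (H - 3/2) \<le> (v + N - 1) powr (H - 1/2) * (v + N - 1 - x) powr (H - 3/2) \<and>
             (v + N - 1) powr (H - 1/2) * (v + N - 1 - x) powr (H - 3/2) \<le> N powr (H - 1/2) * (v + N - 1 - x) powr (H - 3/2)" if v: "v \<in> {0..1}" for v :: real
  proof -
    have "(N - 1) powr (H - 1/2) \<le> (v + N - 1) powr (H - 1/2)"
      by (rule powr_mono2) (use H N v in auto)
    moreover have "(v + N - 1) powr (H - 1/2) \<le> N powr (H - 1/2)"
      by (rule powr_mono2) (use H N v in auto)
    ultimately show ?thesis by (simp add: mult_right_mono)
  qed
  have gN: "((\<lambda>v. N powr (H - 1/2) * (v + N - 1 - x) powr (H - 3/2)) has_integral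
      (N powr (H - 1/2) * (phi / (H - 1/2)))) {0..1}"
    by (rule has_integral_mult_right[OF g])
  have gN1: "((\<lambda>v. (N - 1) powr (H - 1/2) * (v + N - 1 - x) powr (H - 3/2)) has_integral
      ((N - 1) powr (H - 1/2) * (phi / (H - 1/2)))) {0..1}"
    by (rule has_integral_mult_right[OF g])
  have meas: "?h \<in> borel_measurable (lebesgue_on {0..1})"
    using meas_id by measurable
  show hi: "?h integrable_on {0..1}"
  proof (rule int_bound[OF meas has_integral_integrable[OF gN]])
    fix v :: real assume v: "v \<in> {0..1}"
    have "0 \<le> ?h v" by simp
    then show "\<bar>?h v\<bar> \<le> N powr (H - 1/2) * (v + N - 1 - x) powr (H - 3/2)"
      using bnd[OF v] by simp
  qed
  then have hI: "(?h has_integral F) {0..1}" unfolding F_def by (rule integrable_integral)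
  show "(N - 1) powr (H - 1/2) * (phi / (H - 1/2)) \<le> F"
    by (rule has_integral_le[OF gN1 hI]) (use bnd in blast)
  show "F \<le> N powr (H - 1/2) * (phi / (H - 1/2))"
    by (rule has_integral_le[OF hI gN]) (use bnd in blast)
qed


lemma cH_pos:
  assumes "1/2 < H" "H < 1"
  shows "0 < cH H"
proof -
  have "0 < Gamma (3/2 - H)" "0 < Gamma (H + 1/2)" "0 < Gamma (2 - 2*H)"
    using assms by auto
  then have "0 < (2 * H * Gamma (3/2 - H)) / (Gamma (H + 1/2) * Gamma (2 - 2 * H))"
    using assms by (intro divide_pos_pos mult_pos_pos) auto
  then show ?thesis unfolding cH_def by simp
qed

lemma inner1_mono:
  fixes H N x y :: real
  assumes H: "1/2 < H" "H < 1" and N: "2 \<le> N" and xy: "0 \<le> x" "x \<le> y" "y \<le> N - 1"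
  shows "integral {0..1} (\<lambda>v. (v + N - 1) powr (H - 1/2) * (v + N - 1 - x) powr (H - 3/2))
      \<le> integral {0..1} (\<lambda>v. (v + N - 1) powr (H - 1/2) * (v + N - 1 - y) powr (H - 3/2))"
proof (rule int_le_spike0)
  show "(\<lambda>v. (v + N - 1) powr (H - 1/2) * (v + N - 1 - x) powr (H - 3/2)) integrable_on {0..1}"
    by (rule inner1(1)) (use assms in auto)
  show "(\<lambda>v. (v + N - 1) powr (H - 1/2) * (v + N - 1 - y) powr (H - 3/2)) integrable_on {0..1}"
    by (rule inner1(1)) (use assms in auto)
  fix v :: real assume v: "v \<in> {0<..1}"
  have "(v + N - 1 - x) powr (H - 3/2) \<le> (v + N - 1 - y) powr (H - 3/2)"
    by (rule powr_mono2') (use assms v in auto)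
  then show "(v + N - 1) powr (H - 1/2) * (v + N - 1 - x) powr (H - 3/2)
      \<le> (v + N - 1) powr (H - 1/2) * (v + N - 1 - y) powr (H - 3/2)"
    by (simp add: mult_left_mono)
qed


lemma part1:
  fixes H \<sigma> :: real and n i :: nat
  assumes H: "1/2 < H" "H < 1" and s: "\<sigma> > 0" and i: "1 \<le> i" "real i \<le> real n - 1"
  shows "\<sigma> * cH H * (real n - 1) powr (H - 1/2) * InH H n i \<le> jnH H \<sigma> n i \<and>
         jnH H \<sigma> n i \<le> \<sigma> * cH H * (real n) powr (H - 1/2) * InH H n i"
proof -
  define N where "N = real n"
  define a where "a = H - 1/2"
  have a: "0 < a" using H by (simp add: a_def)
  have N: "2 \<le> N" using i by (simp add: N_def)
  define S where "S = {real i - 1 .. real i}"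
  have S0: "x \<in> S \<Longrightarrow> 0 \<le> x \<and> x \<le> N - 1" for x using i by (auto simp: S_def N_def)
  define F where "F = (\<lambda>x. integral {0..1} (\<lambda>v. (v + N - 1) powr (H - 1/2) * (v + N - 1 - x) powr (H - 3/2)))"
  define w where "w = (\<lambda>x::real. x powr (1/2 - H))"
  have w0: "0 \<le> w x" for x by (simp add: w_def)
  have wi: "w integrable_on S"
  proof -
    have "(\<lambda>x. x powr (1/2 - H)) integrable_on {0..real i}"
      by (rule integrable_on_powr_from_0) (use H in auto)
    then show ?thesis unfolding w_def S_def
      by (rule integrable_on_subinterval) (use i in auto)
  qed
  have Fmono: "mono_on S F"
    unfolding mono_on_def F_def
    by (auto intro!: inner1_mono[OF H N] dest: S0)
  have Fi: "F integrable_on S" unfolding S_def by (rule integrable_on_mono_on) (use Fmono in \<open>simp add: S_def\<close>)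
  have [measurable]: "F \<in> borel_measurable (lebesgue_on S)" by (rule integrable_imp_measurable[OF Fi])
  define phi where "phi = (\<lambda>x. phinH H n x)"
  have phi: "0 \<le> phi x \<and> phi x \<le> N powr a" if "x \<in> S" for x
  proof -
    have "(N - 1 - x) powr a \<le> (N - x) powr a" by (rule powr_mono2) (use a S0[OF that] in auto)
    moreover have "(N - x) powr a \<le> N powr a" by (rule powr_mono2) (use a S0[OF that] in auto)
    ultimately show ?thesis using powr_ge_zero[of "N - 1 - x" a] unfolding phi_def phinH_def a_def N_def by linarith
  qed
  have Fb: "N powr a * (phi x / a) \<ge> F x \<and> F x \<ge> (N - 1) powr a * (phi x / a)" if "x \<in> S" for x
    using inner1(2,3)[OF H N, of x] S0[OF that] unfolding F_def phi_def phinH_def a_def N_def by auto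
  have F0: "0 \<le> F x" if "x \<in> S" for x
  proof -
    have "0 \<le> (N - 1) powr a * (phi x / a)" using phi[OF that] a by simp
    then show ?thesis using Fb[OF that] by linarith
  qed
  have Fub: "F x \<le> N powr a * (N powr a / a)" if "x \<in> S" for x
  proof -
    have "N powr a * (phi x / a) \<le> N powr a * (N powr a / a)"
      using phi[OF that] a by (intro mult_left_mono divide_right_mono) auto
    then show ?thesis using Fb[OF that] by linarith
  qed
  have Mi: "(\<lambda>x. w x * F x) integrable_on S"
  proof (rule measurable_bounded_by_integrable_imp_integrable_real)
    show "(\<lambda>x. w x * F x) \<in> borel_measurable (lebesgue_on S)"
      unfolding w_def using meas_id by measurable
    show "(\<lambda>x. w x * (N powr a * (N powr a / a))) integrable_on S"
      using integrable_on_cmult_right[OF wi, of "N powr a * (N powr a / a)"] by simp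
    show "S \<in> sets lebesgue" by (simp add: S_def)
    fix x assume x: "x \<in> S"
    show "\<bar>w x * F x\<bar> \<le> w x * (N powr a * (N powr a / a))"
    proof -
      have "w x * F x \<le> w x * (N powr a * (N powr a / a))"
        using Fub[OF x] w0[of x] by (rule mult_left_mono)
      then show ?thesis using F0[OF x] w0[of x] by (simp add: abs_mult)
    qed
  qed
  have Li: "(\<lambda>x. w x * phi x) integrable_on S"
  proof (rule measurable_bounded_by_integrable_imp_integrable_real)
    show "(\<lambda>x. w x * phi x) \<in> borel_measurable (lebesgue_on S)"
      unfolding w_def phi_def phinH_def using meas_id by measurable
    show "(\<lambda>x. w x * N powr a) integrable_on S"
      using integrable_on_cmult_right[OF wi, of "N powr a"] by simp
    show "S \<in> sets lebesgue" by (simp add: S_def)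
    fix x assume x: "x \<in> S"
    show "\<bar>w x * phi x\<bar> \<le> w x * N powr a"
      using phi[OF x] w0[of x] by (simp add: abs_mult mult_left_mono)
  qed
  define IM where "IM = integral S (\<lambda>x. w x * F x)"
  define IL where "IL = integral S (\<lambda>x. w x * phi x)"
  have MI: "((\<lambda>x. w x * F x) has_integral IM) S" unfolding IM_def using Mi by (rule integrable_integral)
  have LI: "((\<lambda>x. w x * phi x) has_integral IL) S" unfolding IL_def using Li by (rule integrable_integral)
  have jn: "jnH H \<sigma> n i = \<sigma> * (CH H * IM)"
    unfolding jnH_def IM_def S_def w_def F_def N_def by simp
  have In: "InH H n i = IL"
    unfolding InH_def IL_def S_def w_def phi_def by simp
  have cpos: "0 < cH H" by (rule cH_pos[OF H])
  have CH: "CH H = cH H * a" by (simp add: CH_def a_def)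
  have low: "(cH H * (N - 1) powr a) * IL \<le> CH H * IM"
  proof (rule has_integral_le[OF has_integral_mult_right[OF LI] has_integral_mult_right[OF MI]])
    fix x assume x: "x \<in> S"
    have "(N - 1) powr a * phi x = a * ((N - 1) powr a * (phi x / a))" using a by simp
    also have "\<dots> \<le> a * F x" using Fb[OF x] a by (intro mult_left_mono) auto
    finally have "cH H * ((N - 1) powr a * phi x) \<le> cH H * (a * F x)"
      using cpos by (intro mult_left_mono) auto
    then have "cH H * (N - 1) powr a * phi x \<le> CH H * F x" by (simp add: CH mult.assoc mult.left_commute)
    from mult_left_mono[OF this w0[of x]]
    show "cH H * (N - 1) powr a * (w x * phi x) \<le> CH H * (w x * F x)"
      by (simp add: ac_simps)
  qed
  have up: "CH H * IM \<le> (cH H * N powr a) * IL"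
  proof (rule has_integral_le[OF has_integral_mult_right[OF MI] has_integral_mult_right[OF LI]])
    fix x assume x: "x \<in> S"
    have "a * F x \<le> a * (N powr a * (phi x / a))" using Fb[OF x] a by (intro mult_left_mono) auto
    also have "\<dots> = N powr a * phi x" using a by simp
    finally have "cH H * (a * F x) \<le> cH H * (N powr a * phi x)"
      using cpos by (intro mult_left_mono) auto
    then have "CH H * F x \<le> cH H * N powr a * phi x" by (simp add: CH mult.assoc mult.left_commute)
    from mult_left_mono[OF this w0[of x]]
    show "CH H * (w x * F x) \<le> cH H * N powr a * (w x * phi x)"
      by (simp add: ac_simps)
  qed
  show ?thesis
    unfolding jn In using mult_left_mono[OF low, of \<sigma>] mult_left_mono[OF up, of \<sigma>] s
    by (simp add: N_def a_def mult.assoc)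
qed


lemma inner2:
  fixes H N x :: real
  assumes H: "1/2 < H" "H < 1" and N: "2 \<le> N" and x: "N - 1 \<le> x" "x \<le> N"
  defines "K \<equiv> integral {0..1} (\<lambda>y. (y * (N - x) + x) powr (H - 1/2) * y powr (H - 3/2))"
  shows "(\<lambda>y. (y * (N - x) + x) powr (H - 1/2) * y powr (H - 3/2)) integrable_on {0..1}"
    and "x powr (H - 1/2) / (H - 1/2) \<le> K"
    and "K \<le> N powr (H - 1/2) / (H - 1/2)"
proof -
  have e1: "H - 3/2 > -1" using H by simp
  have g: "((\<lambda>y. y powr (H - 3/2)) has_integral (1 / (H - 1/2))) {0..1}"
    using has_integral_powr_from_0[OF e1, of 1] by simp
  have bnd: "x powr (H - 1/2) * y powr (H - 3/2) \<le> (y * (N - x) + x) powr (H - 1/2) * y powr (H - 3/2) \<and>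
             (y * (N - x) + x) powr (H - 1/2) * y powr (H - 3/2) \<le> N powr (H - 1/2) * y powr (H - 3/2)"
    if y: "y \<in> {0..1}" for y :: real
  proof -
    have b1: "x \<le> y * (N - x) + x" using y x by simp
    have "y * (N - x) \<le> 1 * (N - x)" by (rule mult_right_mono) (use y x in auto)
    then have b2: "y * (N - x) + x \<le> N" by simp
    have "x powr (H - 1/2) \<le> (y * (N - x) + x) powr (H - 1/2)"
      by (rule powr_mono2) (use H N x b1 in auto)
    moreover have "(y * (N - x) + x) powr (H - 1/2) \<le> N powr (H - 1/2)"
      by (rule powr_mono2) (use H N x b1 b2 in auto)
    ultimately show ?thesis by (simp add: mult_right_mono)
  qed
  have gN: "((\<lambda>y. N powr (H - 1/2) * y powr (H - 3/2)) has_integral (N powr (H - 1/2) * (1 / (H - 1/2)))) {0..1}"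
    by (rule has_integral_mult_right[OF g])
  have gx: "((\<lambda>y. x powr (H - 1/2) * y powr (H - 3/2)) has_integral (x powr (H - 1/2) * (1 / (H - 1/2)))) {0..1}"
    by (rule has_integral_mult_right[OF g])
  let ?k = "\<lambda>y. (y * (N - x) + x) powr (H - 1/2) * y powr (H - 3/2)"
  have meas: "?k \<in> borel_measurable (lebesgue_on {0..1})"
    using meas_id by measurable
  show ki: "?k integrable_on {0..1}"
  proof (rule int_bound[OF meas has_integral_integrable[OF gN]])
    fix y :: real assume y: "y \<in> {0..1}"
    have "0 \<le> ?k y" by simp
    then show "\<bar>?k y\<bar> \<le> N powr (H - 1/2) * y powr (H - 3/2)"
      using bnd[OF y] by simp
  qed
  then have kI: "(?k has_integral K) {0..1}" unfolding K_def by (rule integrable_integral)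
  have "x powr (H - 1/2) * (1 / (H - 1/2)) \<le> K"
    by (rule has_integral_le[OF gx kI]) (use bnd in blast)
  then show "x powr (H - 1/2) / (H - 1/2) \<le> K" by simp
  have "K \<le> N powr (H - 1/2) * (1 / (H - 1/2))"
    by (rule has_integral_le[OF kI gN]) (use bnd in blast)
  then show "K \<le> N powr (H - 1/2) / (H - 1/2)" by simp
qed

lemma inner2_mono:
  fixes H N x x' :: real
  assumes H: "1/2 < H" "H < 1" and N: "2 \<le> N" and x: "N - 1 \<le> x" "x \<le> x'" "x' \<le> N"
  shows "integral {0..1} (\<lambda>y. (y * (N - x) + x) powr (H - 1/2) * y powr (H - 3/2))
      \<le> integral {0..1} (\<lambda>y. (y * (N - x') + x') powr (H - 1/2) * y powr (H - 3/2))"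
proof (rule integral_le)
  show "(\<lambda>y. (y * (N - x) + x) powr (H - 1/2) * y powr (H - 3/2)) integrable_on {0..1}"
    by (rule inner2(1)) (use assms in auto)
  show "(\<lambda>y. (y * (N - x') + x') powr (H - 1/2) * y powr (H - 3/2)) integrable_on {0..1}"
    by (rule inner2(1)) (use assms in auto)
  fix y :: real assume y: "y \<in> {0..1}"
  have m: "(1 - y) * x \<le> (1 - y) * x'" by (rule mult_left_mono) (use x y in auto)
  have le: "y * (N - x) + x \<le> y * (N - x') + x'" using m by (simp add: algebra_simps)
  have "0 \<le> y * (N - x)" using x y by simp
  then have "0 \<le> y * (N - x) + x" using x N by linarith
  then have "(y * (N - x) + x) powr (H - 1/2) \<le> (y * (N - x') + x') powr (H - 1/2)"
    using le H by (intro powr_mono2) auto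
  then show "(y * (N - x) + x) powr (H - 1/2) * y powr (H - 3/2)
      \<le> (y * (N - x') + x') powr (H - 1/2) * y powr (H - 3/2)"
    by (simp add: mult_right_mono)
qed


lemma part2:
  fixes H \<sigma> :: real and n :: nat
  assumes H: "1/2 < H" "H < 1" and s: "\<sigma> > 0" and n: "1 < n"
  shows "gH H \<sigma> \<le> gnH H \<sigma> n \<and>
         gnH H \<sigma> n \<le> gH H \<sigma> * (1 + 1 / (real n - 1)) powr (H - 1/2)"
proof -
  define N where "N = real n"
  define a where "a = H - 1/2"
  have a: "0 < a" using H by (simp add: a_def)
  have N: "2 \<le> N" using n by (simp add: N_def)
  define S where "S = {N - 1 .. N}"
  have S0: "x \<in> S \<Longrightarrow> N - 1 \<le> x \<and> x \<le> N" for x by (auto simp: S_def)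
  define K where "K = (\<lambda>x. integral {0..1} (\<lambda>y. (y * (N - x) + x) powr (H - 1/2) * y powr (H - 3/2)))"
  have Kmono: "mono_on S K"
    unfolding mono_on_def K_def
    by (auto intro!: inner2_mono[OF H N] dest: S0)
  have Ki: "K integrable_on S" unfolding S_def by (rule integrable_on_mono_on) (use Kmono in \<open>simp add: S_def\<close>)
  have [measurable]: "K \<in> borel_measurable (lebesgue_on S)" by (rule integrable_imp_measurable[OF Ki])
  have Kb: "x powr a / a \<le> K x \<and> K x \<le> N powr a / a" if "x \<in> S" for x
    using inner2(2,3)[OF H N, of x] S0[OF that] unfolding K_def a_def by auto
  have K0: "0 \<le> K x" if "x \<in> S" for x
  proof -
    have "0 \<le> x powr a / a" using a by simp
    then show ?thesis using Kb[OF that] by linarith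
  qed
  define P where "P = (\<lambda>x. x powr (1/2 - H) * (N - x) powr (H - 1/2) * K x)"
  have Pb: "\<bar>P x\<bar> \<le> N powr a / a" if x: "x \<in> S" for x
  proof -
    have x1: "1 \<le> x" using S0[OF x] N by linarith
    have p1: "x powr (1/2 - H) \<le> 1 powr (1/2 - H)"
      by (rule powr_mono2') (use H x1 in auto)
    have p2: "(N - x) powr (H - 1/2) \<le> 1 powr (H - 1/2)"
      by (rule powr_mono2) (use H S0[OF x] in auto)
    have "x powr (1/2 - H) * (N - x) powr (H - 1/2) \<le> 1 * 1"
      using p1 p2 by (intro mult_mono) auto
    then have "P x \<le> 1 * K x" unfolding P_def using K0[OF x] by (intro mult_right_mono) auto
    then have "P x \<le> N powr a / a" using Kb[OF x] by linarith
    moreover have "0 \<le> P x" unfolding P_def using K0[OF x] by simp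
    ultimately show ?thesis by simp
  qed
  have Pi: "P integrable_on S"
  proof (rule measurable_bounded_by_integrable_imp_integrable_real)
    show "P \<in> borel_measurable (lebesgue_on S)"
      unfolding P_def using meas_id by measurable
    show "(\<lambda>x. N powr a / a) integrable_on S"
      unfolding S_def using has_integral_const_real by blast
    show "S \<in> sets lebesgue" by (simp add: S_def)
  qed (rule Pb)
  define IP where "IP = integral S P"
  have PI: "(P has_integral IP) S" unfolding IP_def using Pi by (rule integrable_integral)
  have gn: "gnH H \<sigma> n = \<sigma> * (CH H * IP)"
    unfolding gnH_def IP_def S_def P_def K_def N_def by simp
  have cpos: "0 < cH H" by (rule cH_pos[OF H])
  have CH: "CH H = cH H * a" by (simp add: CH_def a_def)
  have Q: "((\<lambda>x. (N - x) powr a) has_integral (1/(a+1))) S"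
    unfolding S_def by (rule refl_pow[OF a])
  define R where "R = (1 + 1 / (N - 1)) powr a"
  have R: "R = N powr a * (N - 1) powr (1/2 - H)"
  proof -
    have "1 + 1 / (N - 1) = N / (N - 1)" using N by (simp add: field_simps)
    then have "R = N powr a / (N - 1) powr a" unfolding R_def using N by (simp add: powr_divide)
    also have "(N - 1) powr (1/2 - H) = 1 / (N - 1) powr a"
      unfolding a_def using N by (simp add: powr_minus_divide[symmetric])
    ultimately show ?thesis by simp
  qed
  have low: "cH H * (1/(a+1)) \<le> CH H * IP"
  proof (rule has_integral_le[OF has_integral_mult_right[OF Q] has_integral_mult_right[OF PI]])
    fix x assume x: "x \<in> S"
    have xp: "0 < x" using S0[OF x] N by linarith
    have "cH H * x powr a = cH H * a * (x powr a / a)" using a by simp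
    also have "\<dots> \<le> CH H * K x" unfolding CH using Kb[OF x] cpos a
      by (intro mult_left_mono) auto
    finally have c1: "cH H * x powr a \<le> CH H * K x" .
    have inv: "x powr (1/2 - H) * x powr a = 1"
      using xp by (simp add: a_def powr_add[symmetric])
    have "cH H * (N - x) powr a = x powr (1/2 - H) * (N - x) powr a * (cH H * x powr a)"
      using inv by (simp add: ac_simps)
    also have "\<dots> \<le> x powr (1/2 - H) * (N - x) powr a * (CH H * K x)"
      by (rule mult_left_mono[OF c1]) simp
    also have "\<dots> = CH H * P x" unfolding P_def a_def by (simp add: ac_simps)
    finally show "cH H * (N - x) powr a \<le> CH H * P x" .
  qed
  have up: "CH H * IP \<le> (cH H * R) * (1/(a+1))"
  proof (rule has_integral_le[OF has_integral_mult_right[OF PI] has_integral_mult_right[OF Q]])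
    fix x assume x: "x \<in> S"
    have xp: "N - 1 \<le> x" using S0[OF x] by simp
    have c1: "CH H * K x \<le> cH H * N powr a"
    proof -
      have "CH H * K x \<le> cH H * a * (N powr a / a)" unfolding CH using Kb[OF x] cpos a
        by (intro mult_left_mono) auto
      then show ?thesis using a by simp
    qed
    have c2: "x powr (1/2 - H) \<le> (N - 1) powr (1/2 - H)"
      by (rule powr_mono2') (use H N xp in auto)
    have "CH H * P x = x powr (1/2 - H) * (N - x) powr a * (CH H * K x)"
      unfolding P_def a_def by (simp add: ac_simps)
    also have "\<dots> \<le> x powr (1/2 - H) * (N - x) powr a * (cH H * N powr a)"
      by (rule mult_left_mono[OF c1]) simp
    also have "\<dots> \<le> (N - 1) powr (1/2 - H) * (N - x) powr a * (cH H * N powr a)"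
      using c2 cpos by (intro mult_right_mono) auto
    also have "\<dots> = cH H * R * (N - x) powr a" unfolding R by (simp add: ac_simps)
    finally show "CH H * P x \<le> cH H * R * (N - x) powr a" .
  qed
  have gH: "gH H \<sigma> = \<sigma> * (cH H * (1/(a+1)))" unfolding gH_def a_def by simp
  show ?thesis
    unfolding gn gH using mult_left_mono[OF low, of \<sigma>] mult_left_mono[OF up, of \<sigma>] s
    by (simp add: R_def N_def a_def ac_simps)
qed


theorem lemma4p2:
  fixes H \<sigma> :: real and N :: nat
  assumes "1/2 < H" and "H < 1" and "\<sigma> > 0"
  shows "(\<forall>n i. 1 \<le> i \<and> i \<le> n - 1 \<and> n - 1 < N \<longrightarrow>
            \<sigma> * cH H * (real n - 1) powr (H - 1/2) * InH H n i \<le> jnH H \<sigma> n i \<and>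
            jnH H \<sigma> n i \<le> \<sigma> * cH H * (real n) powr (H - 1/2) * InH H n i)
       \<and> (\<forall>n. 1 < n \<and> n \<le> N \<longrightarrow>
            gH H \<sigma> \<le> gnH H \<sigma> n \<and>
            gnH H \<sigma> n \<le> gH H \<sigma> * (1 + 1 / (real n - 1)) powr (H - 1/2))"
proof (intro conjI allI impI)
  fix n i :: nat
  assume h: "1 \<le> i \<and> i \<le> n - 1 \<and> n - 1 < N"
  then have "i + 1 \<le> n" by arith
  then have "real i \<le> real n - 1" by linarith
  from part1[OF assms(1,2,3), of i n] h this
  show "\<sigma> * cH H * (real n - 1) powr (H - 1/2) * InH H n i \<le> jnH H \<sigma> n i"
    and "jnH H \<sigma> n i \<le> \<sigma> * cH H * (real n) powr (H - 1/2) * InH H n i" by auto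
next
  fix n :: nat
  assume h: "1 < n \<and> n \<le> N"
  from part2[OF assms(1,2,3), of n] h
  show "gH H \<sigma> \<le> gnH H \<sigma> n"
    and "gnH H \<sigma> n \<le> gH H \<sigma> * (1 + 1 / (real n - 1)) powr (H - 1/2)" by auto
qed

end
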